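(* Let $0<f_1\le\dots\le f_n$ be opening costs depending on $n$, $\kappa=\max\{i\in[n]: f_i<1/(i-1)\}$ and $F_\kappa=\sum_{i=1}^\kappa f_i$. Suppose that $F_\kappa\in O(\ln(n))$ and set $m:=2n-1$. Then for sufficiently large $n$, $$F_\kappa+\int_{F_\kappa}^\infty\sqrt{1-\left(1-e^{-(x-F_\kappa)}\right)^{n-1}}\,\mathrm{d}x\le 2\sqrt{em}.$$
   Context: In the definition of $\kappa$, $1/(i-1)$ for $i=1$ is interpreted as $+\infty$. Asymptotic notation refers to $n\to\infty$. *)

theory Defs
  imports "HOL-Analysis.Analysis" "HOL-Library.Landau_Symbols"
begin

text \<open>Opening costs depending on n: f n i for i in {1..n}.
  kappa = max {i in [n] : f_i < 1/(i-1)}, where 1/(i-1) = +infinity for i = 1.\<close>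
definition kappa :: "(nat \<Rightarrow> nat \<Rightarrow> real) \<Rightarrow> nat \<Rightarrow> nat" where
  "kappa f n = Max {i \<in> {1..n}. i = 1 \<or> f n i < 1 / (real i - 1)}"

definition Fkappa :: "(nat \<Rightarrow> nat \<Rightarrow> real) \<Rightarrow> nat \<Rightarrow> real" where
  "Fkappa f n = (\<Sum>i = 1..kappa f n. f n i)"

end

theory Submission
  imports Defs "HOL-Real_Asymp.Real_Asymp"
begin

lemma pt_bound:
  fixes F x :: real and k :: nat
  assumes "F \<le> x"
  shows "0 \<le> 1 - (1 - exp (-(x - F))) ^ k \<and>
         sqrt (1 - (1 - exp (-(x - F))) ^ k) \<le> sqrt (real k) * exp (F/2) * exp (-(1/2) * x)"
proof -
  define t where "t = exp (-(x - F))"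
  have t0: "0 < t" unfolding t_def by simp
  have t1: "t \<le> 1" unfolding t_def using assms by simp
  have a: "(1 - t) ^ k \<le> 1" using t0 t1 by (intro power_le_one) auto
  have b: "1 + real k * (-t) \<le> (1 + (-t)) ^ k" using t1 by (intro Bernoulli_inequality) auto
  have c: "1 - (1 - t) ^ k \<le> real k * t" using b by simp
  have "sqrt (1 - (1 - t) ^ k) \<le> sqrt (real k * t)" using c by simp
  also have "sqrt (real k * t) = sqrt (real k) * sqrt t" by (simp add: real_sqrt_mult)
  also have "sqrt t = exp (F/2) * exp (-(1/2) * x)"
  proof -
    have "sqrt t = sqrt (exp (-(x - F)/2) ^ 2)"
      unfolding t_def by (simp add: power2_eq_square exp_add[symmetric])
    also have "\<dots> = exp (-(x - F)/2)" by simp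
    also have "\<dots> = exp (F/2) * exp (-(1/2) * x)" by (simp add: exp_add[symmetric] field_simps)
    finally show ?thesis .
  qed
  finally show ?thesis using a unfolding t_def by (simp add: mult.assoc)
qed

lemma int_bound:
  fixes F :: real and k :: nat
  shows "(\<lambda>x. sqrt (1 - (1 - exp (-(x - F))) ^ k)) integrable_on {F..} \<and>
         integral {F..} (\<lambda>x. sqrt (1 - (1 - exp (-(x - F))) ^ k)) \<le> 2 * sqrt (real k)"
proof -
  define h where "h x = sqrt (real k) * exp (F/2) * exp (-(1/2) * x)" for x
  have "((\<lambda>x. exp (-(1/2)*x)) has_integral exp (-(1/2)*F)/(1/2)) {F..}"
    by (rule has_integral_exp_minus_to_infinity) simp
  then have hi0: "(h has_integral (sqrt (real k) * exp (F/2)) * (exp (-(1/2)*F)/(1/2))) {F..}"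
    unfolding h_def by (rule has_integral_mult_right)
  have eq: "(sqrt (real k) * exp (F/2)) * (exp (-(1/2)*F)/(1/2)) = 2 * sqrt (real k)"
  proof -
    have "exp (F/2) * exp (-(1/2)*F) = 1" by (simp add: exp_add[symmetric])
    then show ?thesis by (simp add: field_simps)
  qed
  have hi: "(h has_integral 2 * sqrt (real k)) {F..}" using hi0 by (simp only: eq)
  have gi: "(\<lambda>x. sqrt (1 - (1 - exp (-(x - F))) ^ k)) integrable_on {F..}"
  proof (rule measurable_bounded_by_integrable_imp_integrable_real)
    show "(\<lambda>x. sqrt (1 - (1 - exp (-(x - F))) ^ k)) \<in> borel_measurable (lebesgue_on {F..})"
      by (intro continuous_imp_measurable_on_sets_lebesgue continuous_intros) auto
    show "h integrable_on {F..}" using hi by blast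
    show "\<bar>sqrt (1 - (1 - exp (-(x - F))) ^ k)\<bar> \<le> h x" if "x \<in> {F..}" for x
      using pt_bound[of F x k] that unfolding h_def by simp
    show "{F..} \<in> sets lebesgue" by simp
  qed
  have "integral {F..} (\<lambda>x. sqrt (1 - (1 - exp (-(x - F))) ^ k)) \<le> integral {F..} h"
    by (rule integral_le[OF gi]) (use hi pt_bound[of F _ k] in \<open>auto simp: h_def\<close>)
  also have "\<dots> = 2 * sqrt (real k)" using hi by blast
  finally show ?thesis using gi by blast
qed

theorem lemma11:
  fixes f :: "nat \<Rightarrow> nat \<Rightarrow> real"
  assumes pos: "\<And>n i. 1 \<le> i \<Longrightarrow> i \<le> n \<Longrightarrow> 0 < f n i"
    and mono: "\<And>n i j. 1 \<le> i \<Longrightarrow> i \<le> j \<Longrightarrow> j \<le> n \<Longrightarrow> f n i \<le> f n j"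
    and bigO: "(\<lambda>n. Fkappa f n) \<in> O(\<lambda>n. ln (real n))"
  shows "\<forall>\<^sub>F n in at_top.
    (\<lambda>x. sqrt (1 - (1 - exp (-(x - Fkappa f n))) ^ (n - 1))) integrable_on {Fkappa f n..} \<and>
    Fkappa f n + integral {Fkappa f n..} (\<lambda>x. sqrt (1 - (1 - exp (-(x - Fkappa f n))) ^ (n - 1)))
      \<le> 2 * sqrt (exp 1 * real (2 * n - 1))"
proof -
  have "(\<lambda>n. ln (real n)) \<in> o(\<lambda>n. sqrt (real n))" by real_asymp
  with bigO have "(\<lambda>n. Fkappa f n) \<in> o(\<lambda>n. sqrt (real n))"
    by (rule landau_o.big_small_trans)
  then have ev: "\<forall>\<^sub>F n in at_top. norm (Fkappa f n) \<le> 1 * norm (sqrt (real n))"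
    by (rule landau_o.smallD) simp
  show ?thesis
    using ev eventually_ge_at_top[of "2::nat"]
  proof eventually_elim
    case (elim n)
    let ?F = "Fkappa f n"
    have F: "?F \<le> sqrt (real n)" using elim(1) by simp
    have I: "integral {?F..} (\<lambda>x. sqrt (1 - (1 - exp (-(x - ?F))) ^ (n - 1))) \<le> 2 * sqrt (real (n-1))"
      using int_bound[of ?F "n-1"] by blast
    have s: "sqrt (real (n-1)) \<le> sqrt (real n)" by simp
    have e: "2 \<le> exp (1::real)" using exp_ge_add_one_self[of 1] by simp
    have "9 * real n \<le> 4 * (exp 1 * real (2 * n - 1))"
    proof -
      have "real (2*n-1) = 2 * real n - 1" using elim(2) by simp
      moreover have "4 * (2 * (2 * real n - 1)) \<le> 4 * (exp 1 * (2 * real n - 1))"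
        using e elim(2) by (intro mult_left_mono mult_right_mono) auto
      ultimately show ?thesis using elim(2) by simp
    qed
    then have "sqrt (9 * real n) \<le> sqrt (4 * (exp 1 * real (2 * n - 1)))"
      using real_sqrt_le_mono by blast
    then have "3 * sqrt (real n) \<le> 2 * sqrt (exp 1 * real (2 * n - 1))"
      by (simp add: real_sqrt_mult)
    then show ?case using int_bound[of ?F "n-1"] F I s by linarith
  qed
qed

end
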